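(* Let $R=\mathbb{Z}[i,\tfrac{1}{\sqrt{2}}]$. For all $m,n\in\mathbb{N}$, a complex $2^{m}\times 2^{n}$ matrix $M$ is the standard interpretation $\llbracket D\rrbracket$ of some diagram $D:n\to m$ of the $\frac{\pi}{4}$-fragment ZX-calculus if and only if every entry of $M$ lies in $R$. That is, the $\frac{\pi}{4}$-fragment ZX-calculus corresponds exactly to the matrices over $R$.
   Context: The $\frac{\pi}{4}$-fragment ZX-calculus is built as follows. Its diagrams $D:k\to l$ ($k$ inputs, $l$ outputs) are generated from the generators below, using sequential composition $\circ$ and parallel composition (tensor) $\otimes$. The generators and their standard interpretations $\llbracket\cdot\rrbracket$ as complex matrices are: - the green spider $R_Z^{(n,m)}:n\to m$ for any $n,m\in\mathbb{N}$, with $\llbracket R_Z^{(n,m)}\rrbracket=|0\rangle^{\otimes m}\langle 0|^{\otimes n}+|1\rangle^{\otimes m}\langle 1|^{\otimes n}$; - the green phase $A_\alpha:1\to1$ for $\alpha\in\{\frac{k\pi}{4}: k=0,\dots,7\}$, with $\llbracket A_\alpha\rrbracket=|0\rangle\langle0|+e^{i\alpha}|1\rangle\langle1|$; - the Hadamard gate $H:1\to1$, with $\llbracket H\rrbracket=\frac{1}{\sqrt2}\begin{pmatrix}1&1\\1&-1\end{pmatrix}$; - the swap $\sigma:2\to2$, with $\llbracket\sigma\rrbracket=\sum_{a,b\in\{0,1\}}|ba\rangle\langle ab|$; - the identity wire $\mathbb{I}:1\to1$, interpreted as the $2\times2$ identity; - the empty diagram $e:0\to0$, interpreted as the scalar $1$;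 - the cap $C_a:0\to2$, with $\llbracket C_a\rrbracket=|00\rangle+|11\rangle$; - the cup $C_u:2\to0$, with $\llbracket C_u\rrbracket=\langle00|+\langle11|$. The interpretation is extended to all diagrams by $\llbracket D_1\circ D_2\rrbracket=\llbracket D_1\rrbracket\llbracket D_2\rrbracket$ (matrix product) and $\llbracket D_1\otimes D_2\rrbracket=\llbracket D_1\rrbracket\otimes\llbracket D_2\rrbracket$ (Kronecker product). A diagram $n\to m$ is thus interpreted as a $2^m\times 2^n$ matrix. *)

theory Defs
  imports Complex_Main "Jordan_Normal_Form.Matrix"
begin

text \<open>Generators and the two compositions. \<open>Phase k\<close> stands for the green phase
  with angle \<open>k * pi / 4\<close>, where \<open>k < 8\<close> is enforced by the typing relation.\<close>

datatype zx =
    Spider nat nat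
  | Phase nat
  | Had
  | Swap
  | IdW
  | Empty
  | Cap
  | Cup
  | Comp zx zx            \<comment> \<open>Comp D1 D2 = D1 o D2 (first D2, then D1)\<close>
  | Tens zx zx

text \<open>\<open>zx_typed D n m\<close> : D is a diagram \<open>n \<rightarrow> m\<close> (n inputs, m outputs).\<close>

inductive zx_typed :: "zx \<Rightarrow> nat \<Rightarrow> nat \<Rightarrow> bool" where
  "zx_typed (Spider n m) n m"
| "k < 8 \<Longrightarrow> zx_typed (Phase k) 1 1"
| "zx_typed Had 1 1"
| "zx_typed Swap 2 2"
| "zx_typed IdW 1 1"
| "zx_typed Empty 0 0"
| "zx_typed Cap 0 2"
| "zx_typed Cup 2 0"
| "zx_typed D2 k l \<Longrightarrow> zx_typed D1 l m \<Longrightarrow> zx_typed (Comp D1 D2) k m"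
| "zx_typed D1 n1 m1 \<Longrightarrow> zx_typed D2 n2 m2 \<Longrightarrow> zx_typed (Tens D1 D2) (n1 + n2) (m1 + m2)"

text \<open>Kronecker product of matrices (basis index of \<open>|a b\<rangle>\<close> is \<open>a * dim b + b\<close>).\<close>

definition kron :: "complex mat \<Rightarrow> complex mat \<Rightarrow> complex mat" where
  "kron A B = mat (dim_row A * dim_row B) (dim_col A * dim_col B)
     (\<lambda>(i, j). A $$ (i div dim_row B, j div dim_col B) * B $$ (i mod dim_row B, j mod dim_col B))"

fun interp :: "zx \<Rightarrow> complex mat" where
  "interp (Spider n m) = mat (2 ^ m) (2 ^ n)
      (\<lambda>(i, j). of_bool (i = 0 \<and> j = 0) + of_bool (i = 2 ^ m - 1 \<and> j = 2 ^ n - 1))"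
| "interp (Phase k) = mat 2 2
      (\<lambda>(i, j). if i = 0 \<and> j = 0 then 1
                else if i = 1 \<and> j = 1 then cis (of_nat k * pi / 4) else 0)"
| "interp Had = mat 2 2
      (\<lambda>(i, j). (if i = 1 \<and> j = 1 then -1 else 1) / complex_of_real (sqrt 2))"
| "interp Swap = mat 4 4 (\<lambda>(i, j). of_bool (i = 2 * (j mod 2) + j div 2))"
| "interp IdW = 1\<^sub>m 2"
| "interp Empty = 1\<^sub>m 1"
| "interp Cap = mat 4 1 (\<lambda>(i, j). of_bool (i = 0 \<or> i = 3))"
| "interp Cup = mat 1 4 (\<lambda>(i, j). of_bool (j = 0 \<or> j = 3))"
| "interp (Comp D1 D2) = interp D1 * interp D2"
| "interp (Tens D1 D2) = kron (interp D1) (interp D2)"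

inductive_set ring_Zi_sqrt2 :: "complex set" where
  one: "1 \<in> ring_Zi_sqrt2"
| ii: "\<i> \<in> ring_Zi_sqrt2"
| inv_sqrt2: "1 / complex_of_real (sqrt 2) \<in> ring_Zi_sqrt2"
| add: "x \<in> ring_Zi_sqrt2 \<Longrightarrow> y \<in> ring_Zi_sqrt2 \<Longrightarrow> x + y \<in> ring_Zi_sqrt2"
| neg: "x \<in> ring_Zi_sqrt2 \<Longrightarrow> - x \<in> ring_Zi_sqrt2"
| mult: "x \<in> ring_Zi_sqrt2 \<Longrightarrow> y \<in> ring_Zi_sqrt2 \<Longrightarrow> x * y \<in> ring_Zi_sqrt2"

end

theory Submission
  imports Defs
begin

abbreviation RR where "RR \<equiv> ring_Zi_sqrt2"

definition rz :: "nat \<Rightarrow> nat \<Rightarrow> complex mat \<Rightarrow> bool" where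
  "rz n m M \<longleftrightarrow> (\<exists>D. zx_typed D n m \<and> interp D = M)"

lemma interp_dim: "zx_typed D n m \<Longrightarrow> interp D \<in> carrier_mat (2^m) (2^n)"
  by (induction rule: zx_typed.induct) (auto simp: kron_def power_add)

lemma rz_dim: "rz n m M \<Longrightarrow> M \<in> carrier_mat (2^m) (2^n)"
  by (auto simp: rz_def dest: interp_dim)

lemma rz_comp: "rz k l A \<Longrightarrow> rz l m B \<Longrightarrow> rz k m (B * A)"
  unfolding rz_def by (metis interp.simps(9) zx_typed.intros(9))

lemma rz_tens: "rz n1 m1 A \<Longrightarrow> rz n2 m2 B \<Longrightarrow> rz (n1+n2) (m1+m2) (kron A B)"
  unfolding rz_def by (metis interp.simps(10) zx_typed.intros(10))

lemma rz_gen: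
  "rz n m (interp (Spider n m))"
  "k < 8 \<Longrightarrow> rz 1 1 (interp (Phase k))"
  "rz 1 1 (interp Had)" "rz 2 2 (interp Swap)" "rz 1 1 (interp IdW)" "rz 0 0 (interp Empty)"
  "rz 0 2 (interp Cap)" "rz 2 0 (interp Cup)"
  unfolding rz_def by (blast intro: zx_typed.intros)+

lemma RR_0: "0 \<in> RR"
proof -
  have "1 + - 1 \<in> RR" by (intro ring_Zi_sqrt2.add ring_Zi_sqrt2.neg ring_Zi_sqrt2.one)
  thus ?thesis by simp
qed

lemma RR_2: "2 \<in> RR"
  using ring_Zi_sqrt2.add[OF ring_Zi_sqrt2.one ring_Zi_sqrt2.one] by simp

lemma RR_sub: "x \<in> RR \<Longrightarrow> y \<in> RR \<Longrightarrow> x - y \<in> RR"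
  using ring_Zi_sqrt2.add[OF _ ring_Zi_sqrt2.neg] by (metis diff_conv_add_uminus)

lemma RR_sum: "(\<And>x. x \<in> A \<Longrightarrow> f x \<in> RR) \<Longrightarrow> sum f A \<in> RR"
proof (induction A rule: infinite_finite_induct)
  case (infinite A) then show ?case by (simp add: RR_0)
next
  case empty then show ?case by (simp add: RR_0)
next
  case (insert x F) then show ?case by (simp add: ring_Zi_sqrt2.add)
qed

lemma RR_pow: "x \<in> RR \<Longrightarrow> x ^ k \<in> RR"
  by (induction k) (auto intro: ring_Zi_sqrt2.one ring_Zi_sqrt2.mult)

lemma RR_of_bool: "of_bool b \<in> RR"
  by (cases b) (auto simp: RR_0 ring_Zi_sqrt2.one)

definition ww :: complex where "ww = cis (pi/4)"
definition hh :: complex where "hh = 1 / complex_of_real (sqrt 2)"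

lemma ww_alt: "ww = hh + \<i> * hh"
  by (simp add: ww_def hh_def complex_eq_iff cis.sel cos_45 sin_45 real_div_sqrt)

lemma cis_k: "cis (of_nat k * pi / 4) = ww ^ k"
  by (simp add: ww_def DeMoivre mult.commute)

lemma ww_RR: "ww \<in> RR"
  unfolding ww_alt hh_def
  by (intro ring_Zi_sqrt2.add ring_Zi_sqrt2.mult ring_Zi_sqrt2.ii ring_Zi_sqrt2.inv_sqrt2)

lemma sound: "zx_typed D n m \<Longrightarrow> \<forall>i<2^m. \<forall>j<2^n. interp D $$ (i,j) \<in> RR"
proof (induction rule: zx_typed.induct)
  case (1 n m) then show ?case by (auto simp: RR_0 RR_2 ring_Zi_sqrt2.one)
next
  case (2 k) then show ?case
    by (auto simp: cis_k ring_Zi_sqrt2.one RR_0 RR_pow ww_RR)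
next
  case 3 then show ?case
    by (auto simp: ring_Zi_sqrt2.inv_sqrt2 intro: ring_Zi_sqrt2.neg[of "1 / complex_of_real (sqrt 2)", simplified])
next
  case 4 then show ?case by (auto simp: RR_of_bool)
next
  case 5 then show ?case by (auto simp: one_mat_def RR_of_bool[of True, simplified] RR_0)
next
  case 6 then show ?case by (auto simp: ring_Zi_sqrt2.one)
next
  case 7 then show ?case by (auto simp: RR_of_bool)
next
  case 8 then show ?case by (auto simp: RR_of_bool)
next
  case (9 D2 k l D1 m)
  have d1: "interp D1 \<in> carrier_mat (2^m) (2^l)" and d2: "interp D2 \<in> carrier_mat (2^l) (2^k)"
    using 9 interp_dim by auto
  show ?case
  proof (intro allI impI)
    fix i j :: nat assume i: "i < 2^m" and j: "j < 2^k"
    have "interp (Comp D1 D2) $$ (i,j) = (\<Sum>q<2^l. interp D1 $$ (i,q) * interp D2 $$ (q,j))"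
      using d1 d2 i j by (simp add: scalar_prod_def atLeast0LessThan mult.commute)
    also have "\<dots> \<in> RR" using 9 i j by (auto intro!: RR_sum ring_Zi_sqrt2.mult)
    finally show "interp (Comp D1 D2) $$ (i,j) \<in> RR" .
  qed
next
  case (10 D1 n1 m1 D2 n2 m2)
  have d1: "interp D1 \<in> carrier_mat (2^m1) (2^n1)" and d2: "interp D2 \<in> carrier_mat (2^m2) (2^n2)"
    using 10 interp_dim by auto
  show ?case
  proof (intro allI impI)
    fix i j :: nat assume i: "i < 2^(m1+m2)" and j: "j < 2^(n1+n2)"
    have a: "i div 2^m2 < 2^m1" using i by (simp add: less_mult_imp_div_less power_add)
    have b: "j div 2^n2 < 2^n1" using j by (simp add: less_mult_imp_div_less power_add)
    have "interp (Tens D1 D2) $$ (i,j) = interp D1 $$ (i div 2^m2, j div 2^n2) * interp D2 $$ (i mod 2^m2, j mod 2^n2)"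
      using d1 d2 i j by (simp add: kron_def power_add)
    also have "\<dots> \<in> RR" using 10 a b by (auto intro!: ring_Zi_sqrt2.mult)
    finally show "interp (Tens D1 D2) $$ (i,j) \<in> RR" .
  qed
qed


lemma hh2: "2 * hh^2 = 1"
  by (simp add: hh_def power2_eq_square field_simps flip: of_real_mult)
lemma ww_hh: "ww = hh + \<i> * hh" by (rule ww_alt)

definition m2 :: "complex \<Rightarrow> complex \<Rightarrow> complex \<Rightarrow> complex \<Rightarrow> complex mat" where
  "m2 a b c d = mat 2 2 (\<lambda>(i,j). if i = 0 then (if j = 0 then a else b) else (if j = 0 then c else d))"
definition v2 :: "complex \<Rightarrow> complex \<Rightarrow> complex mat" where
  "v2 a b = mat 2 1 (\<lambda>(i,j). if i = 0 then a else b)"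
definition e2 :: "complex \<Rightarrow> complex \<Rightarrow> complex mat" where
  "e2 a b = mat 1 2 (\<lambda>(i,j). if j = 0 then a else b)"
definition sc :: "complex \<Rightarrow> complex mat" where
  "sc a = mat 1 1 (\<lambda>_. a)"

lemma less2: "(i::nat) < 2 \<longleftrightarrow> i = 0 \<or> i = 1" by auto
lemma less4: "(i::nat) < 4 \<longleftrightarrow> i = 0 \<or> i = 1 \<or> i = 2 \<or> i = 3" by auto
lemma less8: "(i::nat) < 8 \<longleftrightarrow> i = 0 \<or> i = 1 \<or> i = 2 \<or> i = 3 \<or> i = 4 \<or> i = 5 \<or> i = 6 \<or> i = 7" by auto
lemma sum2: "(\<Sum>x\<in>{0..<2::nat}. f x) = f 0 + f 1" by (simp add: eval_nat_numeral)
lemma sum4: "(\<Sum>x\<in>{0..<4::nat}. f x) = f 0 + f 1 + f 2 + f 3" by (simp add: eval_nat_numeral)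
lemma sum8: "(\<Sum>x\<in>{0..<8::nat}. f x) = f 0 + f 1 + f 2 + f 3 + f 4 + f 5 + f 6 + f 7" by (simp add: eval_nat_numeral)

lemmas bf = less2 less4 less8 sum2 sum4 sum8 scalar_prod_def m2_def v2_def e2_def sc_def kron_def

lemma m2_mult: "m2 a b c d * m2 a' b' c' d' = m2 (a*a'+b*c') (a*b'+b*d') (c*a'+d*c') (c*b'+d*d')"
  by (rule eq_matI) (auto simp: bf)
lemma m2_v2: "m2 a b c d * v2 x y = v2 (a*x+b*y) (c*x+d*y)"
  by (rule eq_matI) (auto simp: bf)
lemma e2_v2: "e2 a b * v2 x y = sc (a*x+b*y)"
  by (rule eq_matI) (auto simp: bf)
lemma e2_m2: "e2 x y * m2 a b c d = e2 (x*a+y*c) (x*b+y*d)"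
  by (rule eq_matI) (auto simp: bf)

lemma i_Had: "interp Had = m2 hh hh hh (-hh)"
  by (rule eq_matI) (auto simp: bf hh_def)
lemma i_Phase: "interp (Phase k) = m2 1 0 0 (ww^k)"
  by (rule eq_matI) (auto simp: bf cis_k)
lemma i_Z01: "interp (Spider 0 1) = v2 1 1"
  by (rule eq_matI) (auto simp: bf)
lemma i_Z10: "interp (Spider 1 0) = e2 1 1"
  by (rule eq_matI) (auto simp: bf)

lemma diag_state: "interp (Spider 2 1) * kron (interp IdW) (v2 a b) = m2 a 0 0 b"
  by (rule eq_matI) (auto simp: bf)

definition fm :: "nat \<Rightarrow> nat \<Rightarrow> (nat \<Rightarrow> nat) \<Rightarrow> (nat \<Rightarrow> complex) \<Rightarrow> complex mat" where
  "fm m n p f = mat (2^m) (2^n) (\<lambda>(i,j). if i = p j then f j else 0)"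

lemma fm_carrier[simp]: "fm m n p f \<in> carrier_mat (2^m) (2^n)" by (simp add: fm_def)
lemma fm_dims[simp]: "dim_row (fm m n p f) = 2^m" "dim_col (fm m n p f) = 2^n" by (simp_all add: fm_def)
lemma fm_index[simp]: "i < 2^m \<Longrightarrow> j < 2^n \<Longrightarrow> fm m n p f $$ (i,j) = (if i = p j then f j else 0)"
  by (simp add: fm_def)

lemma fm_cong: "(\<And>j. j < 2^n \<Longrightarrow> p j = p' j \<and> f j = f' j) \<Longrightarrow> fm m n p f = fm m n p' f'"
  by (rule eq_matI) auto

lemma sum_single: "finite A \<Longrightarrow> (\<Sum>l\<in>A. (if l = a then h l else 0)) = (if a \<in> A then h a else 0)"
  by (simp add: sum.delta')

lemma fm_mult:
  assumes q: "\<And>j. j < 2^n \<Longrightarrow> q j < 2^k"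
  shows "fm m k p f * fm k n q g = fm m n (p \<circ> q) (\<lambda>j. f (q j) * g j)"
proof (rule eq_matI)
  fix i j assume i: "i < dim_row (fm m n (p \<circ> q) (\<lambda>j. f (q j) * g j))"
    and j: "j < dim_col (fm m n (p \<circ> q) (\<lambda>j. f (q j) * g j))"
  have "(fm m k p f * fm k n q g) $$ (i,j) = (\<Sum>l\<in>{0..<2^k}. (if i = p l then f l else 0) * (if l = q j then g j else 0))"
    using i j by (simp add: scalar_prod_def)
  also have "\<dots> = (\<Sum>l\<in>{0..<2^k}. (if l = q j then (if i = p l then f l else 0) * g j else 0))"
    by (rule sum.cong) auto
  also have "\<dots> = (if i = p (q j) then f (q j) * g j else 0)"
    using q[of j] j by (subst sum_single) auto
  finally show "(fm m k p f * fm k n q g) $$ (i,j) = fm m n (p \<circ> q) (\<lambda>j. f (q j) * g j) $$ (i,j)"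
    using i j by simp
qed auto

lemma divmod_eq: "(b::nat) < c \<Longrightarrow> (i div c = a \<and> i mod c = b) \<longleftrightarrow> i = a * c + b"
  by auto

lemma fm_kron:
  assumes q: "\<And>j. j < 2^d \<Longrightarrow> q j < 2^c"
  shows "kron (fm a b p f) (fm c d q g) = fm (a+c) (b+d) (\<lambda>j. p (j div 2^d) * 2^c + q (j mod 2^d)) (\<lambda>j. f (j div 2^d) * g (j mod 2^d))"
proof (rule eq_matI)
  fix i j assume i: "i < dim_row (fm (a+c) (b+d) (\<lambda>j. p (j div 2^d) * 2^c + q (j mod 2^d)) (\<lambda>j. f (j div 2^d) * g (j mod 2^d)))"
    and j: "j < dim_col (fm (a+c) (b+d) (\<lambda>j. p (j div 2^d) * 2^c + q (j mod 2^d)) (\<lambda>j. f (j div 2^d) * g (j mod 2^d)))"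
  have i1: "i div 2^c < 2^a" using i by (simp add: less_mult_imp_div_less power_add)
  have j1: "j div 2^d < 2^b" using j by (simp add: less_mult_imp_div_less power_add)
  have qq: "q (j mod 2^d) < 2^c" using q by simp
  have e: "(i div 2^c = p (j div 2^d) \<and> i mod 2^c = q (j mod 2^d)) \<longleftrightarrow> i = p (j div 2^d) * 2^c + q (j mod 2^d)"
    by (rule divmod_eq[OF qq])
  show "kron (fm a b p f) (fm c d q g) $$ (i,j) = fm (a+c) (b+d) (\<lambda>j. p (j div 2^d) * 2^c + q (j mod 2^d)) (\<lambda>j. f (j div 2^d) * g (j mod 2^d)) $$ (i,j)"
    using i j i1 j1 e by (auto simp: kron_def power_add)
qed (auto simp: kron_def power_add)


lemma rzI: "zx_typed D n m \<Longrightarrow> interp D = M \<Longrightarrow> rz n m M"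
  unfolding rz_def by blast

lemma rz_tens': "rz n1 k1 A \<Longrightarrow> rz n2 k2 B \<Longrightarrow> n = n1+n2 \<Longrightarrow> m = k1+k2 \<Longrightarrow> rz n m (kron A B)"
  using rz_tens by simp

lemma rz_eq: "rz n m A \<Longrightarrow> A = B \<Longrightarrow> rz n m B" by simp

lemma rz_ph: "rz 1 1 (interp (Phase 1))" "rz 1 1 (interp (Phase 2))" "rz 1 1 (interp (Phase 3))"
  "rz 1 1 (interp (Phase 4))" "rz 1 1 (interp (Phase 5))" "rz 1 1 (interp (Phase 6))" "rz 1 1 (interp (Phase 7))"
  by (rule rz_gen(2); simp)+

lemma rz_sp: "n = a \<Longrightarrow> m = b \<Longrightarrow> rz n m (interp (Spider a b))"
  using rz_gen(1) by simp

lemmas rzI_gens = rz_gen(1) rz_ph rz_gen(3-8) rz_sp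

lemma kron_sc: "A \<in> carrier_mat r c \<Longrightarrow> kron (sc x) A = x \<cdot>\<^sub>m A"
  by (rule eq_matI) (auto simp: kron_def sc_def)

lemma rz_scale: assumes s: "rz 0 0 (sc x)" and a: "rz n m A" shows "rz n m (x \<cdot>\<^sub>m A)"
proof -
  have "rz (0+n) (0+m) (kron (sc x) A)" by (rule rz_tens[OF s a])
  moreover have "kron (sc x) A = x \<cdot>\<^sub>m A" using rz_dim[OF a] by (rule kron_sc)
  ultimately show ?thesis by simp
qed

lemma v2_eqI: "a = a' \<Longrightarrow> b = b' \<Longrightarrow> v2 a b = v2 a' b'" by simp
lemma m2_eqI: "a = a' \<Longrightarrow> b = b' \<Longrightarrow> c = c' \<Longrightarrow> d = d' \<Longrightarrow> m2 a b c d = m2 a' b' c' d'" by simp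
lemma sc_eqI: "a = a' \<Longrightarrow> sc a = sc a'" by simp

lemma sc_w7: "rz 0 0 (sc (ww^7))"
proof -
  have "rz 0 0 (interp (Spider 1 0) * (interp (Phase 7) * (interp Had * (interp (Phase 3) * interp (Spider 0 1)))))"
    by (rule rz_comp rzI_gens)+
  moreover have "interp (Spider 1 0) * (interp (Phase 7) * (interp Had * (interp (Phase 3) * interp (Spider 0 1)))) = sc (ww^7)"
    unfolding i_Z10 i_Phase i_Had i_Z01 m2_v2 e2_v2
    by (rule sc_eqI) (unfold ww_hh, use hh2 power2_i in Groebner_Basis.algebra)
  ultimately show ?thesis by simp
qed

lemma sc_sqrt2: "rz 0 0 (sc (2*hh))"
proof -
  have "rz 0 0 (interp (Spider 1 0) * (interp Had * interp (Spider 0 1)))"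
    by (rule rz_comp rzI_gens)+
  moreover have "interp (Spider 1 0) * (interp Had * interp (Spider 0 1)) = sc (2*hh)"
    unfolding i_Z10 i_Had i_Z01 m2_v2 e2_v2 by (rule sc_eqI) simp
  ultimately show ?thesis by simp
qed

lemma s_w: "k < 8 \<Longrightarrow> rz 0 1 (v2 1 (ww^k))"
proof -
  assume k: "k < 8"
  have "rz 0 1 (interp (Phase k) * interp (Spider 0 1))"
    by (rule rz_comp[OF rz_gen(1) rz_gen(2)[OF k]])
  moreover have "interp (Phase k) * interp (Spider 0 1) = v2 1 (ww^k)"
    unfolding i_Phase i_Z01 m2_v2 by simp
  ultimately show ?thesis by simp
qed

definition Dg where "Dg = m2 (hh + hh*ww) 0 0 (hh - hh*ww)"

lemma rz_Dg: "rz 1 1 Dg"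
proof -
  have "rz 1 1 (interp (Spider 2 1) * kron (interp IdW) (interp Had * (interp (Phase 1) * interp (Spider 0 1))))"
    by (rule rz_comp rz_tens' rzI_gens | (simp; fail))+
  moreover have "interp (Spider 2 1) * kron (interp IdW) (interp Had * (interp (Phase 1) * interp (Spider 0 1))) = Dg"
    unfolding i_Had i_Phase i_Z01 m2_v2 diag_state Dg_def by simp
  ultimately show ?thesis by simp
qed

lemma rz_FT: "rz 1 1 (m2 ww 0 (hh*ww) (-\<i>*hh*ww))"
proof -
  have "rz 1 1 (interp Had * (Dg * (interp (Phase 4) * (interp Had * (interp (Phase 1) * interp Had)))))"
    by (rule rz_comp rzI_gens rz_Dg)+
  moreover have "interp Had * (Dg * (interp (Phase 4) * (interp Had * (interp (Phase 1) * interp Had)))) = m2 ww 0 (hh*ww) (-\<i>*hh*ww)"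
    unfolding i_Had i_Phase Dg_def m2_mult
    by (rule m2_eqI; unfold ww_hh; use hh2 power2_i in Groebner_Basis.algebra)
  ultimately show ?thesis by simp
qed

lemma rz_U: "rz 1 1 (m2 (hh*ww) ww (-\<i>*hh*ww) 0)"
proof -
  have "rz 1 1 (interp Had * (interp (Phase 1) * (interp Had * (interp (Phase 4) * (Dg * (interp (Phase 4) * interp Had))))))"
    by (rule rz_comp rzI_gens rz_Dg)+
  moreover have "interp Had * (interp (Phase 1) * (interp Had * (interp (Phase 4) * (Dg * (interp (Phase 4) * interp Had))))) = m2 (hh*ww) ww (-\<i>*hh*ww) 0"
    unfolding i_Had i_Phase Dg_def m2_mult
    by (rule m2_eqI; unfold ww_hh; use hh2 power2_i in Groebner_Basis.algebra)
  ultimately show ?thesis by simp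
qed


lemma fm_smult: "c \<cdot>\<^sub>m fm m n p f = fm m n p (\<lambda>j. c * f j)"
  by (rule eq_matI) auto

lemma v2_smult: "c \<cdot>\<^sub>m v2 a b = v2 (c*a) (c*b)"
  by (rule eq_matI) (auto simp: v2_def)

lemma mult_gadget: "interp (Spider 2 1) * kron (v2 1 a) (v2 1 b) = v2 1 (a*b)"
  by (rule eq_matI) (auto simp: bf)

lemma rz_mult: "rz 0 1 (v2 1 a) \<Longrightarrow> rz 0 1 (v2 1 b) \<Longrightarrow> rz 0 1 (v2 1 (a*b))"
proof -
  assume a: "rz 0 1 (v2 1 a)" and b: "rz 0 1 (v2 1 b)"
  have "rz 0 1 (interp (Spider 2 1) * kron (v2 1 a) (v2 1 b))"
    by (rule rz_comp[OF rz_tens'[OF a b] rz_gen(1)]) simp_all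
  thus ?thesis by (simp only: mult_gadget)
qed

lemma X_eq: "interp Had * (interp (Phase 4) * interp Had) = fm 1 1 (\<lambda>j. 1 - j) (\<lambda>_. 1)"
proof -
  have "interp Had * (interp (Phase 4) * interp Had) = m2 0 1 1 0"
    unfolding i_Had i_Phase m2_mult
    by (rule m2_eqI; unfold ww_hh; use hh2 power2_i in Groebner_Basis.algebra)
  also have "\<dots> = fm 1 1 (\<lambda>j. 1 - j) (\<lambda>_. 1)"
    by (rule eq_matI) (auto simp: bf)
  finally show ?thesis .
qed

lemma rz_X: "rz 1 1 (fm 1 1 (\<lambda>j. 1 - j) (\<lambda>_. 1))"
proof -
  have "rz 1 1 (interp Had * (interp (Phase 4) * interp Had))"
    by (rule rz_comp rzI_gens)+
  thus ?thesis by (simp only: X_eq)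
qed

lemma rz_phi: "rz 0 1 (v2 1 c) \<Longrightarrow> rz 0 1 (v2 1 (hh*(1 - \<i>*c)))"
proof -
  assume c: "rz 0 1 (v2 1 c)"
  have "rz 0 1 (ww^7 \<cdot>\<^sub>m (m2 ww 0 (hh*ww) (-\<i>*hh*ww) * v2 1 c))"
    by (rule rz_scale[OF sc_w7 rz_comp[OF c rz_FT]])
  moreover have "ww^7 \<cdot>\<^sub>m (m2 ww 0 (hh*ww) (-\<i>*hh*ww) * v2 1 c) = v2 1 (hh*(1 - \<i>*c))"
    unfolding m2_v2 v2_smult
    by (rule v2_eqI; unfold ww_hh; use hh2 power2_i in Groebner_Basis.algebra)
  ultimately show ?thesis by simp
qed

definition xf :: "nat \<Rightarrow> nat" where "xf j = (j div 2 + j mod 2) mod 2"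

lemma XOR'_eq: "interp Had * (interp (Spider 2 1) * kron (interp Had) (interp Had)) = fm 1 2 xf (\<lambda>_. hh)"
proof -
  have "interp Had * (interp (Spider 2 1) * kron (interp Had) (interp Had)) =
     mat 2 4 (\<lambda>(i,j). if i = xf j then hh else 0)"
    unfolding i_Had
    using hh2 by (intro eq_matI) (auto simp: bf xf_def power2_eq_square)
  thus ?thesis by (simp add: fm_def)
qed

lemma rz_XOR: "rz 2 1 (fm 1 2 xf (\<lambda>_. 1))"
proof -
  have "rz 2 1 ((2*hh) \<cdot>\<^sub>m (interp Had * (interp (Spider 2 1) * kron (interp Had) (interp Had))))"
    by (rule rz_scale[OF sc_sqrt2]) (rule rz_comp rz_tens' rzI_gens refl | (simp; fail))+
  thus ?thesis unfolding XOR'_eq fm_smult using hh2 by (simp add: power2_eq_square mult.assoc)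
qed


definition qf :: "complex \<Rightarrow> complex \<Rightarrow> complex \<Rightarrow> complex \<Rightarrow> nat \<Rightarrow> complex" where
  "qf a b c d j = (if j mod 2 = 0 then (if j div 2 = 0 then a else b) else (if j div 2 = 0 then c else d))"

lemma QU_eq: "kron (interp IdW) (interp (Spider 2 1)) * (kron (kron (interp IdW) (m2 a b c d)) (interp IdW) * kron (interp (Spider 1 2)) (interp IdW))
   = fm 2 2 id (qf a b c d)"
  by (rule eq_matI) (auto simp: bf qf_def)


lemma add_comp: "fm 1 2 (xf \<circ> id) (\<lambda>j. 1 * qf (hh*ww) ww (-\<i>*hh*ww) 0 j) * kron (v2 1 a) (v2 1 b) = v2 (hh*ww) (ww*a - \<i>*hh*ww*b)"
  by (rule eq_matI) (auto simp: bf qf_def xf_def)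

lemma rz_add0: "rz 0 1 (v2 1 a) \<Longrightarrow> rz 0 1 (v2 1 b) \<Longrightarrow> rz 0 1 (v2 1 (2*hh*a - \<i>*b))"
proof -
  assume a: "rz 0 1 (v2 1 a)" and b: "rz 0 1 (v2 1 b)"
  have q: "rz 2 2 (kron (interp IdW) (interp (Spider 2 1)) * (kron (kron (interp IdW) (m2 (hh*ww) ww (-\<i>*hh*ww) 0)) (interp IdW) * kron (interp (Spider 1 2)) (interp IdW)))"
    by (rule rz_comp rz_tens' rzI_gens rz_U refl | (simp; fail))+
  have "rz 0 1 ((2*hh) \<cdot>\<^sub>m (ww^7 \<cdot>\<^sub>m (fm 1 2 xf (\<lambda>_. 1) * (fm 2 2 id (qf (hh*ww) ww (-\<i>*hh*ww) 0) * kron (v2 1 a) (v2 1 b)))))"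
    apply (rule rz_scale[OF sc_sqrt2])
    apply (rule rz_scale[OF sc_w7])
    apply (rule rz_comp[OF _ rz_XOR])
    apply (rule rz_comp[OF _ q[unfolded QU_eq]])
    apply (rule rz_tens'[OF a b]; simp)
    done
  moreover have "(2*hh) \<cdot>\<^sub>m (ww^7 \<cdot>\<^sub>m (fm 1 2 xf (\<lambda>_. 1) * (fm 2 2 id (qf (hh*ww) ww (-\<i>*hh*ww) 0) * kron (v2 1 a) (v2 1 b))))
     = v2 1 (2*hh*a - \<i>*b)"
  proof -
    have "fm 1 2 xf (\<lambda>_. 1) * (fm 2 2 id (qf (hh*ww) ww (-\<i>*hh*ww) 0) * kron (v2 1 a) (v2 1 b))
       = (fm 1 2 xf (\<lambda>_. 1) * fm 2 2 id (qf (hh*ww) ww (-\<i>*hh*ww) 0)) * kron (v2 1 a) (v2 1 b)"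
      by (rule assoc_mult_mat[symmetric, of _ 2 4 _ 4 _ 1]) (auto simp: v2_def kron_def)
    also have "\<dots> = v2 (hh*ww) (ww*a - \<i>*hh*ww*b)"
    proof -
      have "fm 1 2 xf (\<lambda>_. 1) * fm 2 2 id (qf (hh*ww) ww (-\<i>*hh*ww) 0) = fm 1 2 (xf \<circ> id) (\<lambda>j. 1 * qf (hh*ww) ww (-\<i>*hh*ww) 0 j)"
        by (rule fm_mult) simp
      thus ?thesis using add_comp by simp
    qed
    finally have e: "fm 1 2 xf (\<lambda>_. 1) * (fm 2 2 id (qf (hh*ww) ww (-\<i>*hh*ww) 0) * kron (v2 1 a) (v2 1 b)) = v2 (hh*ww) (ww*a - \<i>*hh*ww*b)" .
    show ?thesis unfolding e v2_smult
      by (intro v2_eqI; unfold ww_hh; use hh2 power2_i in Groebner_Basis.algebra)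
  qed
  ultimately show ?thesis by simp
qed


definition SS where "SS = {r. rz 0 1 (v2 1 r)}"

lemma ww_pow2: "ww^2 = \<i>" unfolding ww_hh using hh2 power2_i by Groebner_Basis.algebra
lemma ww_pow4: "ww^4 = -1" unfolding ww_hh using hh2 power2_i by Groebner_Basis.algebra

lemma SS_1: "1 \<in> SS" using s_w[of 0] by (simp add: SS_def)
lemma SS_i: "\<i> \<in> SS" using s_w[of 2] by (simp add: SS_def ww_pow2)
lemma SS_m1: "-1 \<in> SS" using s_w[of 4] by (simp add: SS_def ww_pow4)
lemma SS_mult: "a \<in> SS \<Longrightarrow> b \<in> SS \<Longrightarrow> a * b \<in> SS" using rz_mult by (simp add: SS_def)
lemma SS_phi: "c \<in> SS \<Longrightarrow> hh*(1 - \<i>*c) \<in> SS" using rz_phi by (simp add: SS_def)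
lemma SS_add0: "a \<in> SS \<Longrightarrow> b \<in> SS \<Longrightarrow> 2*hh*a - \<i>*b \<in> SS" using rz_add0 by (simp add: SS_def)
lemma SS_0: "0 \<in> SS"
proof -
  have "-\<i> \<in> SS" using SS_mult[OF SS_i SS_m1] by simp
  from SS_phi[OF this] show ?thesis by simp
qed
lemma SS_hh: "hh \<in> SS" using SS_phi[OF SS_0] by simp
lemma SS_add: "a \<in> SS \<Longrightarrow> b \<in> SS \<Longrightarrow> a + b \<in> SS"
proof -
  assume a: "a \<in> SS" and b: "b \<in> SS"
  have h: "2*hh*(hh*a) - \<i>*(\<i>*b) \<in> SS" by (intro SS_add0 SS_mult SS_hh SS_i a b)
  have e: "2*hh*(hh*a) - \<i>*(\<i>*b) = a + b"
    using hh2 power2_i by Groebner_Basis.algebra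
  show ?thesis using h by (subst e[symmetric])
qed
lemma SS_neg: "a \<in> SS \<Longrightarrow> - a \<in> SS" using SS_mult[OF SS_m1] by fastforce

lemma RR_SS: "x \<in> RR \<Longrightarrow> x \<in> SS"
proof (induction rule: ring_Zi_sqrt2.induct)
  case one then show ?case by (rule SS_1)
next
  case ii then show ?case by (rule SS_i)
next
  case inv_sqrt2 then show ?case using SS_hh by (simp add: hh_def)
next
  case (add x y) then show ?case by (blast intro: SS_add)
next
  case (neg x) then show ?case by (blast intro: SS_neg)
next
  case (mult x y) then show ?case by (blast intro: SS_mult)
qed

lemma rz_sc: "c \<in> RR \<Longrightarrow> rz 0 0 (sc c)"
proof -
  assume c: "c \<in> RR"
  have "c - 1 \<in> SS" by (rule RR_SS[OF RR_sub[OF c ring_Zi_sqrt2.one]])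
  hence "rz 0 1 (v2 1 (c - 1))" by (simp add: SS_def)
  hence "rz 0 0 (interp (Spider 1 0) * v2 1 (c - 1))" by (rule rz_comp) (rule rz_gen(1))
  thus ?thesis unfolding i_Z10 e2_v2 by simp
qed

lemma rz_K: "r \<in> RR \<Longrightarrow> rz 1 1 (fm 1 1 id (\<lambda>j. if j = 0 then 1 else r))"
proof -
  assume r: "r \<in> RR"
  have "rz 0 1 (v2 1 r)" using RR_SS[OF r] by (simp add: SS_def)
  hence "rz 1 1 (interp (Spider 2 1) * kron (interp IdW) (v2 1 r))"
    by (rule rz_comp[OF rz_tens'[OF rz_gen(5)] rz_gen(1)]) simp_all
  moreover have "interp (Spider 2 1) * kron (interp IdW) (v2 1 r) = fm 1 1 id (\<lambda>j. if j = 0 then 1 else r)"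
    unfolding diag_state by (rule eq_matI) (auto simp: bf)
  ultimately show ?thesis by simp
qed

lemma rz_ket0: "rz 0 1 (fm 1 0 (\<lambda>_. 0) (\<lambda>_. 1))"
proof -
  have "rz 0 1 (v2 1 0)" using SS_0 by (simp add: SS_def)
  moreover have "v2 1 0 = fm 1 0 (\<lambda>_. 0) (\<lambda>_. 1)" by (rule eq_matI) (auto simp: bf)
  ultimately show ?thesis by simp
qed


lemma i_IdW_fm: "interp IdW = fm 1 1 id (\<lambda>_. 1)" by (rule eq_matI) auto
lemma i_Z12_fm: "interp (Spider 1 2) = fm 2 1 (\<lambda>j. 3*j) (\<lambda>_. 1)" by (rule eq_matI) (auto simp: bf)
lemma i_Z21_fm: "interp (Spider 2 1) = fm 1 2 (\<lambda>j. j div 2) (\<lambda>j. if j = 0 \<or> j = 3 then 1 else 0)" by (rule eq_matI) (auto simp: bf)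
lemma i_Z10_fm: "interp (Spider 1 0) = fm 0 1 (\<lambda>_. 0) (\<lambda>_. 1)" by (rule eq_matI) (auto simp: bf)
lemma i_Swap_fm: "interp Swap = fm 2 2 (\<lambda>j. 2*(j mod 2) + j div 2) (\<lambda>_. 1)" by (rule eq_matI) (auto simp: bf)
lemma i_Ph_fm: "interp (Phase k) = fm 1 1 id (\<lambda>j. ww^(k*j))" by (rule eq_matI) (auto simp: bf cis_k)

lemma nat_arith_small: "(1::nat)+1 = 2" "(1::nat)+2 = 3" "(2::nat)+1 = 3" "(1::nat)+3 = 4" "(3::nat)+1 = 4" "(2::nat)+2 = 4"
  "(0::nat)+1 = 1" "(1::nat)+0 = 1" by simp_all

definition pc :: "nat \<Rightarrow> nat" where "pc j = 2*(j div 2) + (j div 2 + j mod 2) mod 2"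

lemma rz_CNOT: "rz 2 2 (fm 2 2 pc (\<lambda>_. 1))"
proof -
  have r: "rz 2 2 (kron (interp IdW) (fm 1 2 xf (\<lambda>_. 1)) * kron (interp (Spider 1 2)) (interp IdW))"
    by (rule rz_comp[OF rz_tens'[OF rz_gen(1) rz_gen(5)] rz_tens'[OF rz_gen(5) rz_XOR]]) simp_all
  have "kron (interp IdW) (fm 1 2 xf (\<lambda>_. 1)) * kron (interp (Spider 1 2)) (interp IdW) = fm 2 2 pc (\<lambda>_. 1)"
    unfolding i_IdW_fm i_Z12_fm
    apply (subst fm_kron, simp add: xf_def)
    apply (subst fm_kron, simp)
    apply (simp only: nat_arith_small)
    apply (subst fm_mult)
    apply (auto simp: less4)[1]
    apply (rule fm_cong)
    apply (auto simp: less4 xf_def pc_def)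
    done
  with r show ?thesis by simp
qed

definition pA :: "nat \<Rightarrow> nat" where "pA j = 4*(j div 4) + 2*((j div 4 + (j div 2) mod 2) mod 2) + j mod 2"
definition pB :: "nat \<Rightarrow> nat" where "pB j = 4*(j div 4) + 2*((j div 2) mod 2) + ((j div 2) mod 2 + j mod 2) mod 2"

lemma rz_gA: "rz 3 3 (fm 3 3 pA (\<lambda>_. 1))"
proof -
  have r: "rz 3 3 (kron (fm 2 2 pc (\<lambda>_. 1)) (interp IdW))"
    by (rule rz_tens'[OF rz_CNOT rz_gen(5)]) simp_all
  have "kron (fm 2 2 pc (\<lambda>_. 1)) (interp IdW) = fm 3 3 pA (\<lambda>_. 1)"
    unfolding i_IdW_fm
    apply (subst fm_kron, simp)
    apply (simp only: nat_arith_small)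
    apply (rule fm_cong)
    apply (auto simp: less8 pc_def pA_def)
    done
  with r show ?thesis by simp
qed

lemma rz_gB: "rz 3 3 (fm 3 3 pB (\<lambda>_. 1))"
proof -
  have r: "rz 3 3 (kron (interp IdW) (fm 2 2 pc (\<lambda>_. 1)))"
    by (rule rz_tens'[OF rz_gen(5) rz_CNOT]) simp_all
  have "kron (interp IdW) (fm 2 2 pc (\<lambda>_. 1)) = fm 3 3 pB (\<lambda>_. 1)"
    unfolding i_IdW_fm
    apply (subst fm_kron)
    apply (auto simp: less4 pc_def)[1]
    apply (simp only: nat_arith_small)
    apply (rule fm_cong)
    apply (auto simp: less8 pc_def pB_def)
    done
  with r show ?thesis by simp
qed

lemma rz_gP3: "k < 8 \<Longrightarrow> rz 3 3 (fm 3 3 id (\<lambda>j. ww^(k*(j mod 2))))"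
proof -
  assume k: "k < 8"
  have r: "rz 3 3 (kron (kron (interp IdW) (interp IdW)) (interp (Phase k)))"
    by (rule rz_tens'[OF rz_tens'[OF rz_gen(5) rz_gen(5)] rz_gen(2)[OF k]]) simp_all
  have "kron (kron (interp IdW) (interp IdW)) (interp (Phase k)) = fm 3 3 id (\<lambda>j. ww^(k*(j mod 2)))"
    unfolding i_IdW_fm i_Ph_fm
    apply (subst fm_kron, simp)
    apply (subst fm_kron)
    apply (auto simp: less2)[1]
    apply (simp only: nat_arith_small)
    apply (rule fm_cong)
    apply (auto simp: less8)
    done
  with r show ?thesis by simp
qed

lemma rz_gP2: "k < 8 \<Longrightarrow> rz 3 3 (fm 3 3 id (\<lambda>j. ww^(k*((j div 2) mod 2))))"
proof -
  assume k: "k < 8"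
  have r: "rz 3 3 (kron (kron (interp IdW) (interp (Phase k))) (interp IdW))"
    by (rule rz_tens'[OF rz_tens'[OF rz_gen(5) rz_gen(2)[OF k]] rz_gen(5)]) simp_all
  have "kron (kron (interp IdW) (interp (Phase k))) (interp IdW) = fm 3 3 id (\<lambda>j. ww^(k*((j div 2) mod 2)))"
    unfolding i_IdW_fm i_Ph_fm
    apply (subst fm_kron, simp)
    apply (subst fm_kron)
    apply (auto simp: less2)[1]
    apply (simp only: nat_arith_small)
    apply (rule fm_cong)
    apply (auto simp: less8)
    done
  with r show ?thesis by simp
qed

lemma rz_gPPP: "rz 3 3 (fm 3 3 id (\<lambda>j. ww^(j div 4 + (j div 2) mod 2 + j mod 2)))"
proof -
  have r: "rz 3 3 (kron (kron (interp (Phase 1)) (interp (Phase 1))) (interp (Phase 1)))"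
    by (rule rz_tens'[OF rz_tens'[OF rz_ph(1) rz_ph(1)] rz_ph(1)]) simp_all
  have "kron (kron (interp (Phase 1)) (interp (Phase 1))) (interp (Phase 1)) = fm 3 3 id (\<lambda>j. ww^(j div 4 + (j div 2) mod 2 + j mod 2))"
    unfolding i_Ph_fm
    apply (subst fm_kron, simp)
    apply (subst fm_kron)
    apply (auto simp: less2)[1]
    apply (simp only: nat_arith_small)
    apply (rule fm_cong)
    apply (auto simp: less8)
    done
  with r show ?thesis by simp
qed


lemma fm_mult3: assumes "q 0 < 8 \<and> q 1 < 8 \<and> q 2 < 8 \<and> q 3 < 8 \<and> q 4 < 8 \<and> q 5 < 8 \<and> q 6 < 8 \<and> q 7 < 8"
  shows "fm 3 3 p f * fm 3 3 q g = fm 3 3 (p \<circ> q) (\<lambda>j. f (q j) * g j)"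
proof (rule fm_mult)
  fix j :: nat assume j: "j < 2^3"
  note h = assms
  have "j = 0 \<or> j = 1 \<or> j = 2 \<or> j = 3 \<or> j = 4 \<or> j = 5 \<or> j = 6 \<or> j = 7" using j by auto
  thus "q j < 2^3" using h by (elim disjE) simp_all
qed

lemma ww_pa: "ww^a * ww^b = ww^(a+b)" "ww^a * (ww^b * c) = ww^(a+b) * c"
  by (simp_all add: power_add mult.assoc)
lemma ww8: "ww^8 = 1"
proof -
  have "ww^8 = (ww^4)^2" by (simp flip: power_mult)
  thus ?thesis by (simp add: ww_pow4)
qed
lemma ww_ge8: "8 \<le> n \<Longrightarrow> ww^n = ww^(n-8)"
proof -
  assume "8 \<le> n"
  hence "ww^n = ww^8 * ww^(n-8)" by (metis le_add_diff_inverse power_add)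
  thus ?thesis by (simp add: ww8)
qed

definition phs :: "nat \<Rightarrow> complex" where "phs n = ww^(n mod 8)"

lemma phs_add: "phs a * phs b = phs (a+b)"
proof -
  have "phs a * phs b = ww^(a mod 8 + b mod 8)" by (simp add: phs_def power_add)
  also have "\<dots> = ww^((a+b) mod 8)"
  proof -
    define x where "x = a mod 8 + b mod 8"
    have "x = x mod 8 + 8 * (x div 8)" by simp
    moreover have "x mod 8 = (a+b) mod 8" unfolding x_def by (simp add: mod_add_eq)
    ultimately have "x = (a+b) mod 8 + 8 * (x div 8)" by simp
    hence "ww^x = ww^((a+b) mod 8) * (ww^8)^(x div 8)" by (metis power_add power_mult)
    thus ?thesis by (simp add: ww8 x_def)
  qed
  finally show ?thesis by (simp add: phs_def)
qed
lemma phs_ge8: "8 \<le> n \<Longrightarrow> phs n = phs (n - 8)"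
  unfolding phs_def by (simp add: le_mod_geq)
lemma phs_Suc: "phs (Suc 0) = phs 1" "phs (Suc (Suc 0)) = phs 2" "phs (Suc (Suc (Suc 0))) = phs 3"
  "phs (Suc (Suc (Suc (Suc 0)))) = phs 4" "phs (Suc (Suc (Suc (Suc (Suc 0))))) = phs 5"
  "phs (Suc (Suc (Suc (Suc (Suc (Suc 0)))))) = phs 6" "phs (Suc (Suc (Suc (Suc (Suc (Suc (Suc 0))))))) = phs 7"
  by (simp_all add: numeral_eq_Suc)
lemma phs_0: "phs 0 = 1" by (simp add: phs_def)
lemma phs_4: "phs 4 = -1" by (simp add: phs_def ww_pow4)

lemma phs_ww: "k < 8 \<Longrightarrow> ww^k = phs k" by (simp add: phs_def)

lemma ccz_s0: "fm 3 3 id (\<lambda>j. phs (j div 4 + (j div 2) mod 2 + j mod 2)) = fm 3 3 (\<lambda>j. [0,1,2,3,4,5,6,7] ! j) (\<lambda>j. phs ([0,1,1,2,1,2,2,3] ! j))"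
  by (rule fm_cong) (auto simp: less8 simp del: One_nat_def; simp add: numeral_eq_Suc)
lemma ccz_s1: "fm 3 3 pB (\<lambda>_. 1) * (fm 3 3 (\<lambda>j. [0,1,2,3,4,5,6,7] ! j) (\<lambda>j. phs ([0,1,1,2,1,2,2,3] ! j))) = fm 3 3 (\<lambda>j. [0,1,3,2,4,5,7,6] ! j) (\<lambda>j. phs ([0,1,1,2,1,2,2,3] ! j))"
  by (subst fm_mult3) (simp_all add: pA_def pB_def, rule fm_cong, auto simp: less8 phs_add phs_ge8 pA_def pB_def phs_Suc simp del: One_nat_def)
lemma ccz_s2: "fm 3 3 id (\<lambda>j. phs (7*(j mod 2))) * (fm 3 3 (\<lambda>j. [0,1,3,2,4,5,7,6] ! j) (\<lambda>j. phs ([0,1,1,2,1,2,2,3] ! j))) = fm 3 3 (\<lambda>j. [0,1,3,2,4,5,7,6] ! j) (\<lambda>j. phs ([0,0,0,2,1,1,1,3] ! j))"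
  by (subst fm_mult3) (simp_all add: pA_def pB_def, rule fm_cong, auto simp: less8 phs_add phs_ge8 pA_def pB_def phs_Suc simp del: One_nat_def)
lemma ccz_s3: "fm 3 3 pA (\<lambda>_. 1) * (fm 3 3 (\<lambda>j. [0,1,3,2,4,5,7,6] ! j) (\<lambda>j. phs ([0,0,0,2,1,1,1,3] ! j))) = fm 3 3 (\<lambda>j. [0,1,3,2,6,7,5,4] ! j) (\<lambda>j. phs ([0,0,0,2,1,1,1,3] ! j))"
  by (subst fm_mult3) (simp_all add: pA_def pB_def, rule fm_cong, auto simp: less8 phs_add phs_ge8 pA_def pB_def phs_Suc simp del: One_nat_def)
lemma ccz_s4: "fm 3 3 id (\<lambda>j. phs (7*((j div 2) mod 2))) * (fm 3 3 (\<lambda>j. [0,1,3,2,6,7,5,4] ! j) (\<lambda>j. phs ([0,0,0,2,1,1,1,3] ! j))) = fm 3 3 (\<lambda>j. [0,1,3,2,6,7,5,4] ! j) (\<lambda>j. phs ([0,0,7,1,0,0,1,3] ! j))"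
  by (subst fm_mult3) (simp_all add: pA_def pB_def, rule fm_cong, auto simp: less8 phs_add phs_ge8 pA_def pB_def phs_Suc simp del: One_nat_def)
lemma ccz_s5: "fm 3 3 pB (\<lambda>_. 1) * (fm 3 3 (\<lambda>j. [0,1,3,2,6,7,5,4] ! j) (\<lambda>j. phs ([0,0,7,1,0,0,1,3] ! j))) = fm 3 3 (\<lambda>j. [0,1,2,3,7,6,5,4] ! j) (\<lambda>j. phs ([0,0,7,1,0,0,1,3] ! j))"
  by (subst fm_mult3) (simp_all add: pA_def pB_def, rule fm_cong, auto simp: less8 phs_add phs_ge8 pA_def pB_def phs_Suc simp del: One_nat_def)
lemma ccz_s6: "fm 3 3 id (\<lambda>j. phs (7*(j mod 2))) * (fm 3 3 (\<lambda>j. [0,1,2,3,7,6,5,4] ! j) (\<lambda>j. phs ([0,0,7,1,0,0,1,3] ! j))) = fm 3 3 (\<lambda>j. [0,1,2,3,7,6,5,4] ! j) (\<lambda>j. phs ([0,7,7,0,7,0,0,3] ! j))"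
  by (subst fm_mult3) (simp_all add: pA_def pB_def, rule fm_cong, auto simp: less8 phs_add phs_ge8 pA_def pB_def phs_Suc simp del: One_nat_def)
lemma ccz_s7: "fm 3 3 pA (\<lambda>_. 1) * (fm 3 3 (\<lambda>j. [0,1,2,3,7,6,5,4] ! j) (\<lambda>j. phs ([0,7,7,0,7,0,0,3] ! j))) = fm 3 3 (\<lambda>j. [0,1,2,3,5,4,7,6] ! j) (\<lambda>j. phs ([0,7,7,0,7,0,0,3] ! j))"
  by (subst fm_mult3) (simp_all add: pA_def pB_def, rule fm_cong, auto simp: less8 phs_add phs_ge8 pA_def pB_def phs_Suc simp del: One_nat_def)
lemma ccz_s8: "fm 3 3 pB (\<lambda>_. 1) * (fm 3 3 (\<lambda>j. [0,1,2,3,5,4,7,6] ! j) (\<lambda>j. phs ([0,7,7,0,7,0,0,3] ! j))) = fm 3 3 (\<lambda>j. [0,1,3,2,5,4,6,7] ! j) (\<lambda>j. phs ([0,7,7,0,7,0,0,3] ! j))"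
  by (subst fm_mult3) (simp_all add: pA_def pB_def, rule fm_cong, auto simp: less8 phs_add phs_ge8 pA_def pB_def phs_Suc simp del: One_nat_def)
lemma ccz_s9: "fm 3 3 id (\<lambda>j. phs (1*(j mod 2))) * (fm 3 3 (\<lambda>j. [0,1,3,2,5,4,6,7] ! j) (\<lambda>j. phs ([0,7,7,0,7,0,0,3] ! j))) = fm 3 3 (\<lambda>j. [0,1,3,2,5,4,6,7] ! j) (\<lambda>j. phs ([0,0,0,0,0,0,0,4] ! j))"
  by (subst fm_mult3) (simp_all add: pA_def pB_def, rule fm_cong, auto simp: less8 phs_add phs_ge8 pA_def pB_def phs_Suc simp del: One_nat_def)
lemma ccz_s10: "fm 3 3 pA (\<lambda>_. 1) * (fm 3 3 (\<lambda>j. [0,1,3,2,5,4,6,7] ! j) (\<lambda>j. phs ([0,0,0,0,0,0,0,4] ! j))) = fm 3 3 (\<lambda>j. [0,1,3,2,7,6,4,5] ! j) (\<lambda>j. phs ([0,0,0,0,0,0,0,4] ! j))"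
  by (subst fm_mult3) (simp_all add: pA_def pB_def, rule fm_cong, auto simp: less8 phs_add phs_ge8 pA_def pB_def phs_Suc simp del: One_nat_def)
lemma ccz_s11: "fm 3 3 pB (\<lambda>_. 1) * (fm 3 3 (\<lambda>j. [0,1,3,2,7,6,4,5] ! j) (\<lambda>j. phs ([0,0,0,0,0,0,0,4] ! j))) = fm 3 3 (\<lambda>j. [0,1,2,3,6,7,4,5] ! j) (\<lambda>j. phs ([0,0,0,0,0,0,0,4] ! j))"
  by (subst fm_mult3) (simp_all add: pA_def pB_def, rule fm_cong, auto simp: less8 phs_add phs_ge8 pA_def pB_def phs_Suc simp del: One_nat_def)
lemma ccz_s12: "fm 3 3 pA (\<lambda>_. 1) * (fm 3 3 (\<lambda>j. [0,1,2,3,6,7,4,5] ! j) (\<lambda>j. phs ([0,0,0,0,0,0,0,4] ! j))) = fm 3 3 (\<lambda>j. [0,1,2,3,4,5,6,7] ! j) (\<lambda>j. phs ([0,0,0,0,0,0,0,4] ! j))"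
  by (subst fm_mult3) (simp_all add: pA_def pB_def, rule fm_cong, auto simp: less8 phs_add phs_ge8 pA_def pB_def phs_Suc simp del: One_nat_def)

lemma CCZ_phs: "fm 3 3 pA (\<lambda>_. 1) * (fm 3 3 pB (\<lambda>_. 1) * (fm 3 3 pA (\<lambda>_. 1) * (fm 3 3 id (\<lambda>j. phs (1*(j mod 2))) * (fm 3 3 pB (\<lambda>_. 1) * (fm 3 3 pA (\<lambda>_. 1) * (fm 3 3 id (\<lambda>j. phs (7*(j mod 2))) * (fm 3 3 pB (\<lambda>_. 1) * (fm 3 3 id (\<lambda>j. phs (7*((j div 2) mod 2))) * (fm 3 3 pA (\<lambda>_. 1) * (fm 3 3 id (\<lambda>j. phs (7*(j mod 2))) * (fm 3 3 pB (\<lambda>_. 1) * (fm 3 3 id (\<lambda>j. phs (j div 4 + (j div 2) mod 2 + j mod 2))))))))))))))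
  = fm 3 3 id (\<lambda>j. if j = 7 then -1 else 1)"
  unfolding ccz_s0 ccz_s1 ccz_s2 ccz_s3 ccz_s4 ccz_s5 ccz_s6 ccz_s7 ccz_s8 ccz_s9 ccz_s10 ccz_s11 ccz_s12
  by (rule fm_cong) (auto simp: less8 phs_0 phs_4 simp del: One_nat_def)


lemma rz_P3': "k < 8 \<Longrightarrow> rz 3 3 (fm 3 3 id (\<lambda>j. phs (k*(j mod 2))))"
proof -
  assume k: "k < 8"
  have "fm 3 3 id (\<lambda>j. ww^(k*(j mod 2))) = fm 3 3 id (\<lambda>j. phs (k*(j mod 2)))"
  proof (rule fm_cong)
    fix j :: nat
    have "k * (j mod 2) < 8" using k by (cases "j mod 2 = 0") auto
    thus "id j = id j \<and> ww^(k*(j mod 2)) = phs (k*(j mod 2))" by (simp add: phs_ww)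
  qed
  thus ?thesis using rz_gP3[OF k] by simp
qed

lemma rz_P2': "k < 8 \<Longrightarrow> rz 3 3 (fm 3 3 id (\<lambda>j. phs (k*((j div 2) mod 2))))"
proof -
  assume k: "k < 8"
  have "fm 3 3 id (\<lambda>j. ww^(k*((j div 2) mod 2))) = fm 3 3 id (\<lambda>j. phs (k*((j div 2) mod 2)))"
  proof (rule fm_cong)
    fix j :: nat
    have "k * ((j div 2) mod 2) < 8" using k by (cases "(j div 2) mod 2 = 0") auto
    thus "id j = id j \<and> ww^(k*((j div 2) mod 2)) = phs (k*((j div 2) mod 2))" by (simp add: phs_ww)
  qed
  thus ?thesis using rz_gP2[OF k] by simp
qed

lemma rz_PPP': "rz 3 3 (fm 3 3 id (\<lambda>j. phs (j div 4 + (j div 2) mod 2 + j mod 2)))"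
proof -
  have "fm 3 3 id (\<lambda>j. ww^(j div 4 + (j div 2) mod 2 + j mod 2)) = fm 3 3 id (\<lambda>j. phs (j div 4 + (j div 2) mod 2 + j mod 2))"
  proof (rule fm_cong)
    fix j :: nat assume j: "j < 2^3"
    have "j div 4 < 2" using j by auto
    moreover have "(j div 2) mod 2 < 2" "j mod 2 < 2" by auto
    ultimately have "j div 4 + (j div 2) mod 2 + j mod 2 < 8" by linarith
    thus "id j = id j \<and> ww^(j div 4 + (j div 2) mod 2 + j mod 2) = phs (j div 4 + (j div 2) mod 2 + j mod 2)"
      by (simp add: phs_ww)
  qed
  thus ?thesis using rz_gPPP by simp
qed

lemma rz_CCZ: "rz 3 3 (fm 3 3 id (\<lambda>j. if j = 7 then -1 else 1))"
  unfolding CCZ_phs[symmetric]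
  by (rule rz_comp rz_gA rz_gB rz_P3' rz_P2' rz_PPP' | simp)+

lemma hh_2h: "hh * (2 * hh) = 1" using hh2 by (simp add: power2_eq_square algebra_simps)

definition pj :: "nat \<Rightarrow> nat" where "pj j = 2*j + (if j = 3 then 1 else 0)"

lemma J_eq: "hh \<cdot>\<^sub>m (kron (kron (interp IdW) (interp IdW)) (interp Had) * (fm 3 3 id (\<lambda>j. if j = 7 then -1 else 1) *
   kron (kron (interp IdW) (interp IdW)) (interp (Spider 0 1)))) = fm 3 2 pj (\<lambda>_. 1)"
  unfolding i_Had using hh2 hh_2h by (intro eq_matI) (auto simp: bf pj_def power2_eq_square)


lemma hh_RR: "hh \<in> RR" unfolding hh_def by (rule ring_Zi_sqrt2.inv_sqrt2)

lemma rz_J: "rz 2 3 (fm 3 2 pj (\<lambda>_. 1))"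
proof -
  have "rz 2 3 (hh \<cdot>\<^sub>m (kron (kron (interp IdW) (interp IdW)) (interp Had) * (fm 3 3 id (\<lambda>j. if j = 7 then -1 else 1) *
   kron (kron (interp IdW) (interp IdW)) (interp (Spider 0 1)))))"
    apply (rule rz_scale[OF rz_sc[OF hh_RR]])
    apply (rule rz_comp[OF rz_comp[OF _ rz_CCZ]])
     apply (rule rz_tens'[OF rz_tens'[OF rz_gen(5) rz_gen(5)] rz_gen(1)]; simp)
    apply (rule rz_tens'[OF rz_tens'[OF rz_gen(5) rz_gen(5)] rz_gen(3)]; simp)
    done
  thus ?thesis by (simp only: J_eq)
qed

lemma rz_id: "rz K K (fm K K id (\<lambda>_. 1))"
proof (induction K)
  case 0
  have e: "interp Empty = fm 0 0 id (\<lambda>_. 1)" by (rule eq_matI) auto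
  from rz_gen(6) show ?case unfolding e .
next
  case (Suc K)
  have "rz (1+K) (1+K) (kron (interp IdW) (fm K K id (\<lambda>_. 1)))" by (rule rz_tens[OF rz_gen(5) Suc])
  moreover have "kron (interp IdW) (fm K K id (\<lambda>_. 1)) = fm (1+K) (1+K) id (\<lambda>_. 1)"
    unfolding i_IdW_fm by (subst fm_kron) (simp, rule fm_cong, simp add: div_mult_mod_eq)
  moreover have "1 + K = Suc K" by simp
  ultimately show ?case by (simp only:)
qed

lemma rz_Z10n: "rz n 0 (fm 0 n (\<lambda>_. 0) (\<lambda>_. 1))"
proof (induction n)
  case 0
  have "interp Empty = fm 0 0 (\<lambda>_. 0) (\<lambda>_. 1)" by (rule eq_matI) auto
  then show ?case using rz_gen(6) by simp
next
  case (Suc n)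
  have "rz (1+n) (0+0) (kron (interp (Spider 1 0)) (fm 0 n (\<lambda>_. 0) (\<lambda>_. 1)))" by (rule rz_tens[OF rz_gen(1) Suc])
  moreover have "kron (interp (Spider 1 0)) (fm 0 n (\<lambda>_. 0) (\<lambda>_. 1)) = fm 0 (1+n) (\<lambda>_. 0) (\<lambda>_. 1)"
    unfolding i_Z10_fm by (subst fm_kron) (simp, simp only: add_0, rule fm_cong, simp)
  ultimately show ?case by simp
qed

definition ones :: "nat \<Rightarrow> complex mat" where "ones m = mat (2^m) 1 (\<lambda>_. 1)"

lemma rz_ones: "rz 0 m (ones m)"
proof (induction m)
  case 0
  have "interp Empty = ones 0" by (rule eq_matI) (auto simp: ones_def)
  then show ?case using rz_gen(6) by simp
next
  case (Suc m)
  have "rz (0+0) (1+m) (kron (interp (Spider 0 1)) (ones m))" by (rule rz_tens[OF rz_gen(1) Suc])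
  moreover have "kron (interp (Spider 0 1)) (ones m) = ones (1+m)"
  proof (rule eq_matI)
    fix i j assume i: "i < dim_row (ones (1+m))" and j: "j < dim_col (ones (1+m))"
    have "i div 2^m < 2" using i by (simp add: ones_def less_mult_imp_div_less)
    thus "kron (interp (Spider 0 1)) (ones m) $$ (i,j) = ones (1+m) $$ (i,j)"
      using i j unfolding i_Z01 by (auto simp: ones_def kron_def v2_def)
  qed (auto simp: ones_def kron_def v2_def i_Z01)
  ultimately show ?case by simp
qed


lemma fm_cong': "m = m' \<Longrightarrow> n = n' \<Longrightarrow> (\<And>j. j < 2^n \<Longrightarrow> p j = p' j \<and> f j = f' j) \<Longrightarrow> fm m n p f = fm m' n' p' f'"
  using fm_cong by blast

definition Cm :: "nat \<Rightarrow> complex \<Rightarrow> complex mat" where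
  "Cm K r = fm K K id (\<lambda>j. if j = 2^K - 1 then r else 1)"

lemma rz_C0: "r \<in> RR \<Longrightarrow> rz 0 0 (Cm 0 r)"
proof -
  assume r: "r \<in> RR"
  have "sc r = Cm 0 r" by (rule eq_matI) (auto simp: sc_def Cm_def)
  thus ?thesis using rz_sc[OF r] by simp
qed

lemma rz_C1: "r \<in> RR \<Longrightarrow> rz 1 1 (Cm 1 r)"
proof -
  assume r: "r \<in> RR"
  have "fm 1 1 id (\<lambda>j. if j = 0 then 1 else r) = Cm 1 r"
    unfolding Cm_def by (rule fm_cong) auto
  thus ?thesis using rz_K[OF r] by simp
qed

lemma arith1: "(x::nat) < 2^K \<Longrightarrow> (c*2^K + x) mod (2^Suc K) = (c mod 2)*2^K + x"
proof -
  assume x: "x < 2^K"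
  have cc: "c mod 2 + 2*(c div 2) = c" by (rule mod_mult_div_eq)
  have "c * 2^K = (c mod 2 + 2*(c div 2)) * 2^K" by (simp only: cc)
  also have "\<dots> = (c mod 2)*2^K + (c div 2)*2^Suc K"
    by (simp only: distrib_right distrib_left power_Suc mult.assoc mult.left_commute mult.commute)
  finally have e: "c*2^K + x = ((c mod 2)*2^K + x) + (c div 2) * 2^Suc K" by simp
  have "(c mod 2)*2^K + x < 2^Suc K"
  proof -
    have h: "(c mod 2)*2^K \<le> 1*2^K" by (rule mult_le_mono1) simp
    have h2: "(2::nat)^Suc K = 2*2^K" by simp
    show ?thesis using h h2 x by linarith
  qed
  thus ?thesis unfolding e mod_mult_self1 by (rule mod_less)
qed

lemma A1_eq: "kron (fm 3 2 pj (\<lambda>_. 1)) (fm K K id (\<lambda>_. 1)) =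
   fm (Suc (Suc (Suc K))) (Suc (Suc K)) (\<lambda>j. pj (j div 2^K) * 2^K + j mod 2^K) (\<lambda>_. 1)"
  by (subst fm_kron) (simp, rule fm_cong', simp_all)

lemma A2_eq: "kron (fm 2 2 id (\<lambda>_. 1)) (Cm (Suc K) r) =
   fm (Suc (Suc (Suc K))) (Suc (Suc (Suc K))) id (\<lambda>j. if j mod 2^(Suc K) = 2^(Suc K) - 1 then r else 1)"
  unfolding Cm_def by (subst fm_kron) (simp, rule fm_cong', simp_all add: div_mult_mod_eq)

lemma A3_eq: "kron (kron (fm 2 2 id (\<lambda>_. 1)) (fm 0 1 (\<lambda>_. 0) (\<lambda>_. 1))) (fm K K id (\<lambda>_. 1)) =
   fm (Suc (Suc K)) (Suc (Suc (Suc K))) (\<lambda>j. (j div 2^K) div 2 * 2^K + j mod 2^K) (\<lambda>_. 1)"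
  by (subst fm_kron, simp, subst fm_kron, simp) (rule fm_cong', simp_all)

lemma rz_Cstep:
  assumes r: "r \<in> RR" and IH: "rz (Suc K) (Suc K) (Cm (Suc K) r)"
  shows "rz (Suc (Suc K)) (Suc (Suc K)) (Cm (Suc (Suc K)) r)"
proof -
  have rA1: "rz (2+K) (3+K) (kron (fm 3 2 pj (\<lambda>_. 1)) (fm K K id (\<lambda>_. 1)))"
    by (rule rz_tens[OF rz_J rz_id])
  have rA2: "rz (2+Suc K) (2+Suc K) (kron (fm 2 2 id (\<lambda>_. 1)) (Cm (Suc K) r))"
    by (rule rz_tens[OF rz_id IH])
  have rA3: "rz (2+1+K) (2+0+K) (kron (kron (fm 2 2 id (\<lambda>_. 1)) (fm 0 1 (\<lambda>_. 0) (\<lambda>_. 1))) (fm K K id (\<lambda>_. 1)))"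
    by (rule rz_tens[OF rz_tens[OF rz_id rz_Z10n] rz_id])
  have r3: "rz (Suc (Suc K)) (Suc (Suc K)) (fm (Suc (Suc K)) (Suc (Suc (Suc K))) (\<lambda>j. (j div 2^K) div 2 * 2^K + j mod 2^K) (\<lambda>_. 1) *
       (fm (Suc (Suc (Suc K))) (Suc (Suc (Suc K))) id (\<lambda>j. if j mod 2^(Suc K) = 2^(Suc K) - 1 then r else 1) *
        fm (Suc (Suc (Suc K))) (Suc (Suc K)) (\<lambda>j. pj (j div 2^K) * 2^K + j mod 2^K) (\<lambda>_. 1)))"
  proof -
    have "2 + K = Suc (Suc K)" "3 + K = Suc (Suc (Suc K))" "2 + Suc K = Suc (Suc (Suc K))" "2+1+K = Suc (Suc (Suc K))" "2+0+K = Suc (Suc K)"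
      by simp_all
    note eqs = this
    show ?thesis
      by (rule rz_comp[OF rz_comp[OF rA1[unfolded eqs A1_eq] rA2[unfolded eqs A2_eq]] rA3[unfolded eqs A3_eq]])
  qed
  have key: "\<And>j. j < 2^Suc (Suc K) \<Longrightarrow>
      pj (j div 2^K) * 2^K + j mod 2^K < 2^Suc (Suc (Suc K)) \<and>
      (pj (j div 2^K) * 2^K + j mod 2^K) div 2^K div 2 * 2^K + (pj (j div 2^K) * 2^K + j mod 2^K) mod 2^K = j \<and>
      ((pj (j div 2^K) * 2^K + j mod 2^K) mod 2^(Suc K) = 2^(Suc K) - 1 \<longleftrightarrow> j = 2^Suc (Suc K) - 1)"
  proof -
    fix j :: nat assume j: "j < 2^Suc (Suc K)"
    define y where "y = j div 2^K"
    define x where "x = j mod 2^K"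
    have jyx: "j = y * 2^K + x" unfolding x_def y_def by (rule div_mult_mod_eq[symmetric])
    have x: "x < 2^K" unfolding x_def by simp
    have y: "y < 4" unfolding y_def using j by (simp add: less_mult_imp_div_less)
    have p2: "(2::nat)^K \<ge> 1" by simp
    have t1: "(pj y * 2^K + x) div 2^K = pj y" using x by simp
    have t2: "(pj y * 2^K + x) mod 2^K = x" using x by simp
    have t3: "(pj y * 2^K + x) mod 2^(Suc K) = (pj y mod 2) * 2^K + x" using arith1[OF x] .
    have pjy: "pj y \<le> 7" "pj y div 2 = y" "pj y mod 2 = (if y = 3 then 1 else 0)"
      using y unfolding pj_def by auto
    have b: "pj y * 2^K + x < 2^Suc (Suc (Suc K))"
    proof -
      have h1: "pj y * 2^K \<le> 7 * 2^K" using pjy(1) by (rule mult_le_mono1)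
      have h2: "(2::nat)^Suc (Suc (Suc K)) = 8 * 2^K" by simp
      show ?thesis using h1 h2 x by linarith
    qed
    have c: "((pj y mod 2) * 2^K + x = 2^(Suc K) - 1) \<longleftrightarrow> (y = 3 \<and> x = 2^K - 1)"
    proof -
      have q: "(2::nat)^(Suc K) - 1 = 2^K + (2^K - 1)" using p2 by simp
      show ?thesis
      proof (cases "y = 3")
        case True
        hence m: "pj y mod 2 = 1" using pjy(3) by simp
        show ?thesis unfolding q m using True by (simp only: mult_1 add_left_cancel simp_thms)
      next
        case False
        hence m: "pj y mod 2 = 0" using pjy(3) by simp
        have l: "\<not> ((pj y mod 2)*2^K + x = 2^K + (2^K - 1))"
          unfolding m using x by (simp only: mult_0 add_0; linarith)
        thus ?thesis unfolding q using False by blast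
      qed
    qed
    have d: "(j = 2^Suc (Suc K) - 1) \<longleftrightarrow> (y = 3 \<and> x = 2^K - 1)"
    proof
      assume "j = 2^Suc (Suc K) - 1"
      hence "j = 3 * 2^K + (2^K - 1)" using p2 by simp
      moreover have "(2::nat)^K - 1 < 2^K" using p2 by simp
      ultimately have "j div 2^K = 3 \<and> j mod 2^K = 2^K - 1" using divmod_eq by blast
      thus "y = 3 \<and> x = 2^K - 1" unfolding y_def x_def .
    next
      assume "y = 3 \<and> x = 2^K - 1"
      thus "j = 2^Suc (Suc K) - 1" using jyx p2 by simp
    qed
    show "?thesis j" unfolding y_def[symmetric] x_def[symmetric]
      using b c d t1 t2 t3 pjy jyx[symmetric] by simp
  qed
  have e: "fm (Suc (Suc K)) (Suc (Suc (Suc K))) (\<lambda>j. (j div 2^K) div 2 * 2^K + j mod 2^K) (\<lambda>_. 1) *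
       (fm (Suc (Suc (Suc K))) (Suc (Suc (Suc K))) id (\<lambda>j. if j mod 2^(Suc K) = 2^(Suc K) - 1 then r else 1) *
        fm (Suc (Suc (Suc K))) (Suc (Suc K)) (\<lambda>j. pj (j div 2^K) * 2^K + j mod 2^K) (\<lambda>_. 1)) = Cm (Suc (Suc K)) r"
    unfolding Cm_def
    apply (subst fm_mult)
    subgoal for j using key[of j] by simp
    apply (subst fm_mult)
    subgoal for j using key[of j] by simp
    apply (rule fm_cong)
    subgoal for j using key[of j] by simp
    done
  show ?thesis using r3 unfolding e .
qed


lemma rz_Cm: "r \<in> RR \<Longrightarrow> rz K K (Cm K r)"
proof (cases K)
  case 0 assume r: "r \<in> RR" thus ?thesis using rz_C0 0 by simp
next
  case (Suc K') assume r: "r \<in> RR"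
  have "rz (Suc K') (Suc K') (Cm (Suc K') r)"
  proof (induction K')
    case 0 thus ?case using rz_C1[OF r] by simp
  next
    case (Suc K'') thus ?case by (rule rz_Cstep[OF r])
  qed
  thus ?thesis using Suc by simp
qed

fun pf :: "nat \<Rightarrow> nat \<Rightarrow> nat \<Rightarrow> nat" where
  "pf 0 y j = j"
| "pf (Suc K) y j = (if y div 2^K = 1 then j div 2^K else 1 - j div 2^K) * 2^K + pf K (y mod 2^K) (j mod 2^K)"

lemma pf_props: "y < 2^K \<Longrightarrow> j < 2^K \<Longrightarrow> pf K y j < 2^K \<and> pf K y (pf K y j) = j \<and> pf K y y = 2^K - 1"
proof (induction K arbitrary: y j)
  case 0 thus ?case by simp
next
  case (Suc K)
  define yb where "yb = y div 2^K"
  define jb where "jb = j div 2^K"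
  define b where "b = (if yb = 1 then jb else 1 - jb)"
  define r where "r = pf K (y mod 2^K) (j mod 2^K)"
  have yb: "yb < 2" unfolding yb_def using Suc.prems by (simp add: less_mult_imp_div_less)
  have jb: "jb < 2" unfolding jb_def using Suc.prems by (simp add: less_mult_imp_div_less)
  have b: "b < 2" unfolding b_def using jb by auto
  have IH: "r < 2^K \<and> pf K (y mod 2^K) r = j mod 2^K" unfolding r_def using Suc.IH[of "y mod 2^K" "j mod 2^K"] by simp
  have IHy: "pf K (y mod 2^K) (y mod 2^K) = 2^K - 1" using Suc.IH[of "y mod 2^K" "y mod 2^K"] by simp
  have e: "pf (Suc K) y j = b * 2^K + r" unfolding b_def r_def yb_def jb_def by simp
  have bd: "(b * 2^K + r) div 2^K = b" "(b * 2^K + r) mod 2^K = r" using IH by simp_all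
  have p1: "b * 2^K + r < 2^Suc K"
  proof -
    have h: "b * 2^K \<le> 1 * 2^K" using b by (intro mult_le_mono1) simp
    have h2: "(2::nat)^Suc K = 2*2^K" by simp
    show ?thesis using h h2 IH by linarith
  qed
  have bb: "(if yb = 1 then b else 1 - b) = jb" unfolding b_def using jb by auto
  have p2: "pf (Suc K) y (b * 2^K + r) = j"
  proof -
    have "pf (Suc K) y (b * 2^K + r) = jb * 2^K + j mod 2^K"
      using bd IH bb by (simp add: yb_def[symmetric] split: if_split_asm)
    thus ?thesis unfolding jb_def by (simp only: div_mult_mod_eq)
  qed
  have p3: "pf (Suc K) y y = 2^Suc K - 1"
  proof -
    have ybv: "(if yb = 1 then yb else 1 - yb) = 1" using yb by auto
    have "pf (Suc K) y y = (if yb = 1 then yb else 1 - yb) * 2^K + pf K (y mod 2^K) (y mod 2^K)"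
      by (simp only: pf.simps yb_def)
    also have "\<dots> = 1 * 2^K + (2^K - 1)" by (simp only: ybv IHy)
    also have "\<dots> = 2^Suc K - 1" by simp
    finally show ?thesis .
  qed
  show ?case using e p1 p2 p3 by simp
qed

lemma rz_flip: "y < 2^K \<Longrightarrow> rz K K (fm K K (pf K y) (\<lambda>_. 1))"
proof (induction K arbitrary: y)
  case 0
  have e: "fm 0 0 (pf 0 y) (\<lambda>_. 1) = fm 0 0 id (\<lambda>_. 1)" by (rule fm_cong) simp
  show ?case by (subst e) (rule rz_id)
next
  case (Suc K)
  define g where "g = (if y div 2^K = 1 then (\<lambda>j::nat. j) else (\<lambda>j. 1 - j))"
  have rg: "rz 1 1 (fm 1 1 g (\<lambda>_. 1))"
  proof (cases "y div 2^K = 1")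
    case True
    have "fm 1 1 g (\<lambda>_. 1) = fm 1 1 id (\<lambda>_. 1)" unfolding g_def using True by (intro fm_cong) simp
    thus ?thesis using rz_id[of 1] by simp
  next
    case False thus ?thesis using rz_X unfolding g_def by simp
  qed
  have r: "rz (1+K) (1+K) (kron (fm 1 1 g (\<lambda>_. 1)) (fm K K (pf K (y mod 2^K)) (\<lambda>_. 1)))"
    by (rule rz_tens[OF rg Suc.IH]) simp
  have e: "kron (fm 1 1 g (\<lambda>_. 1)) (fm K K (pf K (y mod 2^K)) (\<lambda>_. 1)) = fm (Suc K) (Suc K) (pf (Suc K) y) (\<lambda>_. 1)"
    apply (subst fm_kron)
    subgoal for j using pf_props[of "y mod 2^K" K j] by simp
    apply (rule fm_cong')
    apply (simp_all add: g_def)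
    done
  have o: "1 + K = Suc K" by simp
  show ?case using r unfolding e o .
qed

lemma rz_diag1: "y < 2^K \<Longrightarrow> r \<in> RR \<Longrightarrow> rz K K (fm K K id (\<lambda>j. if j = y then r else 1))"
proof -
  assume y: "y < 2^K" and r: "r \<in> RR"
  have rr: "rz K K (fm K K (pf K y) (\<lambda>_. 1) * (Cm K r * fm K K (pf K y) (\<lambda>_. 1)))"
    by (rule rz_comp[OF rz_comp[OF rz_flip[OF y] rz_Cm[OF r]] rz_flip[OF y]])
  have "fm K K (pf K y) (\<lambda>_. 1) * (Cm K r * fm K K (pf K y) (\<lambda>_. 1)) = fm K K id (\<lambda>j. if j = y then r else 1)"
    unfolding Cm_def
    apply (subst fm_mult)
    subgoal for j using pf_props[OF y, of j] by simp
    apply (subst fm_mult)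
    subgoal for j using pf_props[OF y, of j] by simp
    apply (rule fm_cong)
    subgoal for j using pf_props[OF y, of j] pf_props[OF y y] by auto
    done
  thus ?thesis using rr by simp
qed


lemma rz_diagN:
  assumes v: "\<And>k. k < 2^K \<Longrightarrow> v k \<in> RR"
  shows "N \<le> 2^K \<Longrightarrow> rz K K (fm K K id (\<lambda>j. if j < N then v j else 1))"
proof (induction N)
  case 0
  have e: "fm K K id (\<lambda>j. if j < 0 then v j else 1) = fm K K id (\<lambda>_. 1)" by (rule fm_cong) simp
  show ?case by (subst e) (rule rz_id)
next
  case (Suc N)
  have N: "N < 2^K" using Suc.prems by simp
  have r: "rz K K (fm K K id (\<lambda>j. if j = N then v N else 1) * fm K K id (\<lambda>j. if j < N then v j else 1))"
    by (rule rz_comp[OF Suc.IH rz_diag1[OF N v[OF N]]]) (use Suc.prems in simp)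
  have e: "fm K K id (\<lambda>j. if j = N then v N else 1) * fm K K id (\<lambda>j. if j < N then v j else 1)
     = fm K K id (\<lambda>j. if j < Suc N then v j else 1)"
    by (subst fm_mult) (simp, rule fm_cong, auto simp: less_Suc_eq)
  show ?case using r unfolding e .
qed

lemma complete:
  assumes M: "M \<in> carrier_mat (2^m) (2^n)" and R: "\<forall>i<2^m. \<forall>j<2^n. M $$ (i,j) \<in> RR"
  shows "rz n m M"
proof -
  define v where "v k = M $$ (k div 2^n, k mod 2^n)" for k
  have vR: "\<And>k. k < 2^(m+n) \<Longrightarrow> v k \<in> RR"
  proof -
    fix k :: nat assume k: "k < 2^(m+n)"
    have "k div 2^n < 2^m" using k by (simp add: less_mult_imp_div_less power_add)
    thus "v k \<in> RR" unfolding v_def using R by simp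
  qed
  have D: "rz (m+n) (m+n) (fm (m+n) (m+n) id (\<lambda>j. if j < 2^(m+n) then v j else 1))"
    by (rule rz_diagN[OF vR]) simp_all
  have D': "fm (m+n) (m+n) id (\<lambda>j. if j < 2^(m+n) then v j else 1) = fm (m+n) (m+n) id v"
    by (rule fm_cong) simp
  have L: "rz (m+n) (m+0) (kron (fm m m id (\<lambda>_. 1)) (fm 0 n (\<lambda>_. 0) (\<lambda>_. 1)))"
    by (rule rz_tens[OF rz_id rz_Z10n])
  have Le: "kron (fm m m id (\<lambda>_. 1)) (fm 0 n (\<lambda>_. 0) (\<lambda>_. 1)) = fm m (m+n) (\<lambda>j. j div 2^n) (\<lambda>_. 1)"
    by (subst fm_kron) (simp, rule fm_cong', simp_all)
  have Rt: "rz (0+n) (m+n) (kron (ones m) (fm n n id (\<lambda>_. 1)))"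
    by (rule rz_tens[OF rz_ones rz_id])
  have all: "rz n m (fm m (m+n) (\<lambda>j. j div 2^n) (\<lambda>_. 1) * (fm (m+n) (m+n) id v * kron (ones m) (fm n n id (\<lambda>_. 1))))"
    using rz_comp[OF rz_comp[OF Rt[unfolded add_0] D[unfolded D']] L[unfolded add_0_right Le]] .
  have e1: "fm m (m+n) (\<lambda>j. j div 2^n) (\<lambda>_. 1) * fm (m+n) (m+n) id v = fm m (m+n) (\<lambda>j. j div 2^n) v"
    by (subst fm_mult) (simp, rule fm_cong, simp)
  have dk: "kron (ones m) (fm n n id (\<lambda>_. 1)) \<in> carrier_mat (2^(m+n)) (2^n)"
    by (simp add: kron_def ones_def power_add)
  have e2: "fm m (m+n) (\<lambda>j. j div 2^n) v * kron (ones m) (fm n n id (\<lambda>_. 1)) = M"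
  proof (rule eq_matI)
    fix i j assume i: "i < dim_row M" and j: "j < dim_col M"
    have i': "i < 2^m" and j': "j < 2^n" using i j M by auto
    have "(fm m (m+n) (\<lambda>j. j div 2^n) v * kron (ones m) (fm n n id (\<lambda>_. 1))) $$ (i,j)
       = (\<Sum>k\<in>{0..<2^(m+n)}. fm m (m+n) (\<lambda>j. j div 2^n) v $$ (i,k) * kron (ones m) (fm n n id (\<lambda>_. 1)) $$ (k,j))"
      using i' j' dk by (simp add: scalar_prod_def)
    also have "\<dots> = (\<Sum>k\<in>{0..<2^(m+n)}. (if k = i * 2^n + j then v k else 0))"
    proof (rule sum.cong)
      fix k :: nat assume k: "k \<in> {0..<2^(m+n)}"
      have kd: "k div 2^n < 2^m" using k by (simp add: less_mult_imp_div_less power_add)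
      have "kron (ones m) (fm n n id (\<lambda>_. 1)) $$ (k,j) = (if k mod 2^n = j then 1 else 0)"
        using k j' kd by (simp add: kron_def ones_def power_add)
      moreover have "(i = k div 2^n \<and> k mod 2^n = j) \<longleftrightarrow> k = i * 2^n + j"
        using divmod_eq[OF j', of k i] by auto
      ultimately show "fm m (m+n) (\<lambda>j. j div 2^n) v $$ (i,k) * kron (ones m) (fm n n id (\<lambda>_. 1)) $$ (k,j)
          = (if k = i * 2^n + j then v k else 0)"
        using i' k by auto
    qed simp
    also have "\<dots> = v (i * 2^n + j)"
    proof -
      have "i * 2^n + j < 2^(m+n)"
      proof -
        have "i * 2^n + j < (i+1) * 2^n" using j' by simp
        also have "\<dots> \<le> 2^m * 2^n" using i' by (intro mult_le_mono1) simp
        finally show ?thesis by (simp add: power_add)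
      qed
      thus ?thesis by (subst sum_single) auto
    qed
    also have "\<dots> = M $$ (i,j)" unfolding v_def using j' by simp
    finally show "(fm m (m+n) (\<lambda>j. j div 2^n) v * kron (ones m) (fm n n id (\<lambda>_. 1))) $$ (i,j) = M $$ (i,j)" .
  qed (use M dk in auto)
  have "fm m (m+n) (\<lambda>j. j div 2^n) (\<lambda>_. 1) * (fm (m+n) (m+n) id v * kron (ones m) (fm n n id (\<lambda>_. 1))) = M"
    using e1 e2 dk by (subst assoc_mult_mat[symmetric, of _ "2^m" "2^(m+n)" _ "2^(m+n)" _ "2^n"]) auto
  thus ?thesis using all by simp
qed

theorem mainTheorem1:
  fixes m n :: nat and M :: "complex mat"
  assumes "M \<in> carrier_mat (2 ^ m) (2 ^ n)"
  shows "(\<exists>D. zx_typed D n m \<and> interp D = M) \<longleftrightarrow>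
         (\<forall>i < 2 ^ m. \<forall>j < 2 ^ n. M $$ (i, j) \<in> ring_Zi_sqrt2)"
proof
  assume "\<exists>D. zx_typed D n m \<and> interp D = M"
  then obtain D where "zx_typed D n m" "interp D = M" by blast
  thus "\<forall>i < 2 ^ m. \<forall>j < 2 ^ n. M $$ (i, j) \<in> ring_Zi_sqrt2" using sound by blast
next
  assume "\<forall>i < 2 ^ m. \<forall>j < 2 ^ n. M $$ (i, j) \<in> ring_Zi_sqrt2"
  from complete[OF assms this] show "\<exists>D. zx_typed D n m \<and> interp D = M" unfolding rz_def .
qed

end
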